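(* Let $\alpha>0$ and $N\ge2$. If $\mu,\nu$ are probability measures on $\Omega_N$ such that $\mu\in\mathcal{S}$ and $\mu$ is stochastically dominated by $\nu$ (i.e. $\mu(f)\le\nu(f)$ for every increasing $f$), then $$\|\mu-\pi_{N,\alpha}\|_{TV}\le\|\nu-\pi_{N,\alpha}\|_{TV}.$$
   Context: $\Omega_N=\{x\in\mathbb{R}^{N-1}:0\le x_1\le\dots\le x_{N-1}\le N\}$, $x_0=0,x_N=N$; increasing means w.r.t. coordinatewise order. For $k\in\{1,\dots,N\}$, $\Omega_{k,N}=\{x\in\Omega_N:x_k=N\}$ (so $\Omega_{1,N}=\{(N,\dots,N)\}$, $\Omega_{N,N}=\Omega_N$). $\pi_{k,\alpha}$ is the law of $(x_1,\dots,x_{N-1})$ with $x_j=\sum_{i\le j}\eta_i$, where $\eta_1,\dots,\eta_k$ are i.i.d. Gamma with shape $\alpha$ (any rate) conditioned on $\sum_{i=1}^k\eta_i=N$, and $\eta_{k+1}=\dots=\eta_N=0$; $\pi_{N,\alpha}$ is the case $k=N$ (density proportional to $\prod_{i=1}^N(x_i-x_{i-1})^{\alpha-1}$). $\mathcal{S}_k$ is the set of probability measures supported on $\Omega_{k,N}$, absolutely continuous w.r.t. $\pi_{k,\alpha}$ with increasing density. $\mathcal{S}$ is the set of probability measures $\mu=\sum_{k=1}^N\gamma_k\mu_k$ with $\mu_k\in\mathcal{S}_k$, $\gamma_k\ge0$, $\sum\gamma_k=1$. *)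

theory Defs
  imports "HOL-Probability.Probability"
begin

text \<open>Points of \<Omega>_N are vectors (x_1,...,x_{N-1}) represented as extensional functions
  on the index set {1..N-1}; the ambient measurable space is the product of Borel
  lines over {1..N-1}.\<close>

definition OmegaM :: "nat \<Rightarrow> (nat \<Rightarrow> real) measure" where
  "OmegaM N = PiM {1..N-1} (\<lambda>_. lborel)"

definition xc :: "nat \<Rightarrow> (nat \<Rightarrow> real) \<Rightarrow> nat \<Rightarrow> real" where
  "xc N x j = (if j = 0 then 0 else if j = N then real N else x j)"

definition Omega :: "nat \<Rightarrow> (nat \<Rightarrow> real) set" where
  "Omega N = {x \<in> space (OmegaM N). \<forall>j<N. xc N x j \<le> xc N x (Suc j)}"

definition Omega_k :: "nat \<Rightarrow> nat \<Rightarrow> (nat \<Rightarrow> real) set" where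
  "Omega_k N k = {x \<in> Omega N. xc N x k = real N}"

definition cle :: "nat \<Rightarrow> (nat \<Rightarrow> real) \<Rightarrow> (nat \<Rightarrow> real) \<Rightarrow> bool" where
  "cle N x y \<longleftrightarrow> (\<forall>i\<in>{1..N-1}. x i \<le> y i)"

definition increasing_on :: "nat \<Rightarrow> (nat \<Rightarrow> real) set \<Rightarrow> ((nat \<Rightarrow> real) \<Rightarrow> real) \<Rightarrow> bool" where
  "increasing_on N A f \<longleftrightarrow> (\<forall>x\<in>A. \<forall>y\<in>A. cle N x y \<longrightarrow> f x \<le> f y)"

text \<open>Unnormalised Dirichlet density of (x_1,...,x_{k-1}), with x_0 = 0, x_k = N:
  the indicator of 0 \<le> x_1 \<le> ... \<le> x_{k-1} \<le> N times \<Prod>_{i=1}^k (x_i - x_{i-1})^(\<alpha>-1).\<close>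
definition dir_dens :: "nat \<Rightarrow> real \<Rightarrow> nat \<Rightarrow> (nat \<Rightarrow> real) \<Rightarrow> real" where
  "dir_dens N \<alpha> k y =
     (let z = (\<lambda>j. if j = 0 then 0 else if j = k then real N else y j) in
      if (\<forall>j<k. z j \<le> z (Suc j))
      then (\<Prod>i\<in>{1..k}. (z i - z (i - 1)) powr (\<alpha> - 1))
      else 0)"

definition embed_k :: "nat \<Rightarrow> nat \<Rightarrow> (nat \<Rightarrow> real) \<Rightarrow> (nat \<Rightarrow> real)" where
  "embed_k N k y = (\<lambda>j\<in>{1..N-1}. if j < k then y j else real N)"

text \<open>\<pi>_{k,\<alpha>}: law of the partial sums of k i.i.d. Gamma(\<alpha>) variables conditioned on
  their sum being N (a scaled Dirichlet(\<alpha>,...,\<alpha>) law), padded with zero increments.\<close>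
definition pi_k :: "nat \<Rightarrow> real \<Rightarrow> nat \<Rightarrow> (nat \<Rightarrow> real) measure" where
  "pi_k N \<alpha> k =
     (let L = PiM {1..k-1} (\<lambda>_. lborel);
          Z = (\<integral>\<^sup>+ y. ennreal (dir_dens N \<alpha> k y) \<partial>L) in
      distr (density L (\<lambda>y. ennreal (dir_dens N \<alpha> k y) / Z)) (OmegaM N) (embed_k N k))"

definition S_k :: "nat \<Rightarrow> real \<Rightarrow> nat \<Rightarrow> (nat \<Rightarrow> real) measure set" where
  "S_k N \<alpha> k = {\<mu>. prob_space \<mu> \<and> sets \<mu> = sets (OmegaM N) \<and> emeasure \<mu> (Omega_k N k) = 1 \<and>
     (\<exists>h. h \<in> borel_measurable (OmegaM N) \<and> (\<forall>x. 0 \<le> h x) \<and>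
          increasing_on N (Omega_k N k) h \<and>
          \<mu> = density (pi_k N \<alpha> k) (\<lambda>x. ennreal (h x)))}"

definition S_set :: "nat \<Rightarrow> real \<Rightarrow> (nat \<Rightarrow> real) measure set" where
  "S_set N \<alpha> = {\<mu>. prob_space \<mu> \<and> sets \<mu> = sets (OmegaM N) \<and>
     (\<exists>\<gamma> \<mu>s. (\<forall>k\<in>{1..N}. 0 \<le> \<gamma> k \<and> \<mu>s k \<in> S_k N \<alpha> k) \<and> (\<Sum>k\<in>{1..N}. \<gamma> k) = (1::real) \<and>
        (\<forall>A\<in>sets (OmegaM N). emeasure \<mu> A = (\<Sum>k\<in>{1..N}. ennreal (\<gamma> k) * emeasure (\<mu>s k) A)))}"

definition prob_on_Omega :: "nat \<Rightarrow> (nat \<Rightarrow> real) measure \<Rightarrow> bool" where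
  "prob_on_Omega N \<mu> \<longleftrightarrow> prob_space \<mu> \<and> sets \<mu> = sets (OmegaM N) \<and> emeasure \<mu> (Omega N) = 1"

definition stoch_dom :: "nat \<Rightarrow> (nat \<Rightarrow> real) measure \<Rightarrow> (nat \<Rightarrow> real) measure \<Rightarrow> bool" where
  "stoch_dom N \<mu> \<nu> \<longleftrightarrow>
     (\<forall>f. f \<in> borel_measurable (OmegaM N) \<longrightarrow> bounded (range f) \<longrightarrow> increasing_on N (Omega N) f \<longrightarrow>
        (\<integral>x. f x \<partial>\<mu>) \<le> (\<integral>x. f x \<partial>\<nu>))"

definition tv_dist :: "'a measure \<Rightarrow> 'a measure \<Rightarrow> real" where
  "tv_dist \<mu> \<nu> = (SUP A\<in>sets \<mu>. \<bar>measure \<mu> A - measure \<nu> A\<bar>)"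

end

theory Submission
  imports Defs
begin


lemma xc_meas[measurable]:
  "(\<lambda>x. xc N x j) \<in> borel_measurable (OmegaM N)"
proof (cases "j = 0 \<or> j = N \<or> j \<in> {1..N-1}")
  case True
  then show ?thesis unfolding xc_def OmegaM_def
    by (cases "N = 0") (auto intro!: measurable_component_singleton)
next
  case False
  then have "j \<notin> {1..N-1}" "j \<noteq> 0" "j \<noteq> N" by auto
  then have "\<And>x. x \<in> space (OmegaM N) \<Longrightarrow> xc N x j = undefined"
    unfolding xc_def OmegaM_def by (auto simp: space_PiM PiE_def extensional_def)
  then show ?thesis by (subst measurable_cong[where g="\<lambda>_. undefined"]) auto
qed

lemma Omega_alt: "Omega N = {x\<in>space (OmegaM N). \<forall>j\<in>{..<N}. xc N x j \<le> xc N x (Suc j)}"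
  unfolding Omega_def by auto

lemma Omega_sets[measurable]: "Omega N \<in> sets (OmegaM N)"
  unfolding Omega_alt
  apply (rule sets.sets_Collect_countable_All')
  subgoal by measurable
  by simp

lemma Omega_k_sets[measurable]: "Omega_k N k \<in> sets (OmegaM N)"
proof -
  have "Omega_k N k = Omega N \<inter> {x\<in>space (OmegaM N). xc N x k = real N}"
    unfolding Omega_k_def Omega_def by auto
  also have "\<dots> \<in> sets (OmegaM N)" by measurable
  finally show ?thesis .
qed

lemma dir_dens_eq: "dir_dens N \<alpha> N y = (if (\<forall>j<N. xc N y j \<le> xc N y (Suc j))
      then (\<Prod>i\<in>{1..N}. (xc N y i - xc N y (i - 1)) powr (\<alpha> - 1)) else 0)"
  by (simp only: dir_dens_def xc_def Let_def)


lemma dir_dens_meas[measurable]: "(\<lambda>y. dir_dens N \<alpha> N y) \<in> borel_measurable (OmegaM N)"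
proof -
  have X: "(\<lambda>y. if y \<in> Omega N then (\<Prod>i\<in>{1..N}. (xc N y i - xc N y (i - 1)) powr (\<alpha> - 1)) else 0)
     \<in> borel_measurable (OmegaM N)"
    by measurable
  have eq: "\<And>y. y \<in> space (OmegaM N) \<Longrightarrow> dir_dens N \<alpha> N y =
     (if y \<in> Omega N then (\<Prod>i\<in>{1..N}. (xc N y i - xc N y (i - 1)) powr (\<alpha> - 1)) else 0)"
    by (simp add: dir_dens_eq Omega_def)
  show ?thesis
    by (subst measurable_cong[where g="\<lambda>y. if y \<in> Omega N then (\<Prod>i\<in>{1..N}. (xc N y i - xc N y (i - 1)) powr (\<alpha> - 1)) else 0"])
       (simp_all only: eq X)
qed

lemma embed_meas[measurable]: "embed_k N N \<in> measurable (OmegaM N) (OmegaM N)"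
  unfolding embed_k_def OmegaM_def
  by (rule measurable_restrict) (auto intro!: measurable_component_singleton)

lemma pi_eq: "pi_k N \<alpha> N = distr (density (OmegaM N) (\<lambda>y. ennreal (dir_dens N \<alpha> N y) / (\<integral>\<^sup>+ y. ennreal (dir_dens N \<alpha> N y) \<partial>OmegaM N))) (OmegaM N) (embed_k N N)"
  unfolding pi_k_def OmegaM_def Let_def by simp

lemma pi_sets[simp]: "sets (pi_k N \<alpha> N) = sets (OmegaM N)"
  unfolding pi_eq by simp

lemma pi_space[simp]: "space (pi_k N \<alpha> N) = space (OmegaM N)"
  unfolding pi_eq by simp

lemma pi_total: "emeasure (pi_k N \<alpha> N) (space (OmegaM N)) \<le> 1"
proof -
  define Z where "Z = (\<integral>\<^sup>+ y. ennreal (dir_dens N \<alpha> N y) \<partial>OmegaM N)"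
  have "emeasure (pi_k N \<alpha> N) (space (OmegaM N)) =
     emeasure (density (OmegaM N) (\<lambda>y. ennreal (dir_dens N \<alpha> N y) / Z)) (space (OmegaM N))"
    unfolding pi_eq Z_def[symmetric]
    by (subst emeasure_distr) (auto simp: measurable_space[OF embed_meas] Int_absorb1 subsetI)
  also have "\<dots> = (\<integral>\<^sup>+ y. ennreal (dir_dens N \<alpha> N y) / Z \<partial>OmegaM N)"
    by (subst emeasure_density) (auto intro!: nn_integral_cong)
  also have "\<dots> = Z / Z"
    by (subst nn_integral_divide) (auto simp: Z_def)
  also have "\<dots> \<le> 1"
    by (cases "Z = 0"; cases "Z = top") (auto simp: top.not_eq_extremum simp flip: divide_ennreal_def)
  finally show ?thesis .
qed



definition UU :: "nat \<Rightarrow> (nat \<Rightarrow> real) set" where "UU N = {x\<in>space (OmegaM N). x (N-1) = real N}"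

lemma UU_sets[measurable]: "N \<ge> 2 \<Longrightarrow> UU N \<in> sets (OmegaM N)"
proof -
  assume "N \<ge> 2"
  then have "UU N = {x\<in>space (OmegaM N). xc N x (N-1) = real N}"
    unfolding UU_def xc_def by auto
  then show ?thesis by simp
qed

lemma pi_UU: assumes "N \<ge> 2" shows "emeasure (pi_k N \<alpha> N) (UU N) = 0"
proof -
  interpret product_sigma_finite "\<lambda>_. lborel" by standard
  define Z where "Z = (\<integral>\<^sup>+ y. ennreal (dir_dens N \<alpha> N y) \<partial>OmegaM N)"
  have e: "embed_k N N y (N - Suc 0) = y (N - Suc 0)" for y
    using assms by (auto simp: embed_k_def)
  have pre: "embed_k N N -` UU N \<inter> space (OmegaM N) = UU N"
    using measurable_space[OF embed_meas, of _ N] by (auto simp: UU_def e)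
  have "UU N = PiE {1..N-1} (\<lambda>i. if i = N-1 then {real N} else UNIV)"
  proof -
    have m: "N - 1 \<in> {1..N-1}" using assms by auto
    have "x \<in> PiE {1..N-1} (\<lambda>i. if i = N-1 then {real N} else UNIV) \<longleftrightarrow>
          x \<in> PiE {1..N-1} (\<lambda>_. UNIV) \<and> x (N-1) = real N" for x
    proof
      assume a: "x \<in> PiE {1..N-1} (\<lambda>i. if i = N-1 then {real N} else UNIV)"
      then have "x (N-1) \<in> (if N-1 = N-1 then {real N} else UNIV)" using m by (rule PiE_mem)
      then show "x \<in> PiE {1..N-1} (\<lambda>_. UNIV) \<and> x (N-1) = real N"
        using a by (auto simp: PiE_iff)
    next
      assume "x \<in> PiE {1..N-1} (\<lambda>_. UNIV) \<and> x (N-1) = real N"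
      then show "x \<in> PiE {1..N-1} (\<lambda>i. if i = N-1 then {real N} else UNIV)"
        by (auto simp: PiE_iff)
    qed
    then show ?thesis unfolding UU_def OmegaM_def space_PiM space_lborel space_borel by blast
  qed
  then have "emeasure (OmegaM N) (UU N) = (\<Prod>i\<in>{1..N-1}. emeasure lborel (if i = N-1 then {real N} else UNIV))"
    unfolding OmegaM_def by (simp add: emeasure_PiM)
  also have "\<dots> = 0"
    using assms by (intro prod_zero) (auto intro!: bexI[of _ "N-1"])
  finally have "UU N \<in> null_sets (OmegaM N)" using UU_sets assms by auto
  then have ae: "AE x in OmegaM N. x \<notin> UU N" by (rule AE_not_in)
  have "UU N \<in> null_sets (density (OmegaM N) (\<lambda>y. ennreal (dir_dens N \<alpha> N y) / Z))"
    apply (subst null_sets_density_iff)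
    subgoal by measurable
    using ae assms by (auto elim!: AE_mp)
  then show ?thesis
    unfolding pi_eq Z_def[symmetric]
    using assms by (subst emeasure_distr) (auto simp: pre)
qed



lemma Omega_mono:
  assumes "x \<in> Omega N" "j \<le> m" "m \<le> N"
  shows "xc N x j \<le> xc N x m"
  using assms(2,3)
proof (induction m rule: dec_induct)
  case base then show ?case by simp
next
  case (step n)
  then have "xc N x n \<le> xc N x (Suc n)" using assms(1) unfolding Omega_def by auto
  with step show ?case by simp
qed

lemma xc_N[simp]: "xc N x N = real N" by (simp add: xc_def)

lemma xc_mid: assumes "N \<ge> 2" shows "xc N x (N - Suc 0) = x (N - Suc 0)"
proof -
  have "N - Suc 0 \<noteq> 0" "N - Suc 0 \<noteq> N" using assms by auto
  then show ?thesis by (simp add: xc_def)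
qed

lemma Omega_k_sub_UU:
  assumes "N \<ge> 2" "1 \<le> k" "k < N" "x \<in> Omega_k N k"
  shows "x \<in> UU N"
proof -
  have x: "x \<in> Omega N" "xc N x k = real N" using assms(4) unfolding Omega_k_def by auto
  have "xc N x k \<le> xc N x (N-1)" using x assms by (intro Omega_mono) auto
  moreover have "xc N x (N-1) \<le> xc N x N" using x assms by (intro Omega_mono) auto
  ultimately have "x (N-1) = real N" using x assms by (simp add: xc_mid)
  then show ?thesis using x unfolding UU_def Omega_def by auto
qed

lemma UU_up:
  assumes "N \<ge> 2" "x \<in> UU N" "y \<in> Omega N" "cle N x y"
  shows "y \<in> UU N"
proof -
  have "x (N-1) \<le> y (N-1)" using assms(1,4) unfolding cle_def by auto
  moreover have "x (N-1) = real N" using assms(2) unfolding UU_def by auto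
  moreover have "xc N y (N-1) \<le> xc N y N" using assms by (intro Omega_mono) auto
  ultimately have "y (N-1) = real N" using assms(1) by (simp add: xc_mid)
  then show ?thesis using assms(3) unfolding UU_def Omega_def by auto
qed

lemma Omega_k_N: "Omega_k N N = Omega N"
  unfolding Omega_k_def by auto

lemma split_meas:
  assumes "finite_measure M" "X \<in> sets M" "Y \<in> sets M"
  shows "measure M X = measure M (X \<inter> Y) + measure M (X - Y)"
proof -
  have "X = (X \<inter> Y) \<union> (X - Y)" by auto
  then have "measure M X = measure M ((X \<inter> Y) \<union> (X - Y))" by simp
  also have "\<dots> = measure M (X \<inter> Y) + measure M (X - Y)"
    using assms by (intro finite_measure.finite_measure_Union) auto
  finally show ?thesis .
qed



theorem lemma6p1:
  fixes \<alpha> :: real and N :: nat and \<mu> \<nu> :: "(nat \<Rightarrow> real) measure"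
  assumes "\<alpha> > 0" and "N \<ge> 2"
    and "prob_on_Omega N \<mu>" and "prob_on_Omega N \<nu>"
    and "\<mu> \<in> S_set N \<alpha>"
    and "stoch_dom N \<mu> \<nu>"
  shows "tv_dist \<mu> (pi_k N \<alpha> N) \<le> tv_dist \<nu> (pi_k N \<alpha> N)"
proof -
  define \<pi> where "\<pi> = pi_k N \<alpha> N"
  have N2: "N \<ge> 2" by fact
  have mu: "prob_space \<mu>" "sets \<mu> = sets (OmegaM N)" "emeasure \<mu> (Omega N) = 1"
    using assms(3) unfolding prob_on_Omega_def by auto
  have nu: "prob_space \<nu>" "sets \<nu> = sets (OmegaM N)"
    using assms(4) unfolding prob_on_Omega_def by auto
  interpret mu: prob_space \<mu> by (rule mu(1))
  interpret nu: prob_space \<nu> by (rule nu(1))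
  have sp_mu: "space \<mu> = space (OmegaM N)" using mu(2) by (rule sets_eq_imp_space_eq)
  have sp_nu: "space \<nu> = space (OmegaM N)" using nu(2) by (rule sets_eq_imp_space_eq)
  have pi_sets': "sets \<pi> = sets (OmegaM N)" and pi_space': "space \<pi> = space (OmegaM N)"
    unfolding \<pi>_def by simp_all
  have pi_tot: "emeasure \<pi> (space \<pi>) \<le> 1" unfolding \<pi>_def by (simp add: pi_total)
  interpret pi: finite_measure \<pi>
    using pi_tot by (intro finite_measureI) (auto simp: top_unique)
  have piU: "emeasure \<pi> (UU N) = 0" unfolding \<pi>_def using N2 by (rule pi_UU)
  obtain \<gamma> \<mu>s where g: "\<forall>k\<in>{1..N}. 0 \<le> \<gamma> k \<and> \<mu>s k \<in> S_k N \<alpha> k"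
    and gsum: "(\<Sum>k\<in>{1..N}. \<gamma> k) = (1::real)"
    and mdec: "\<forall>A\<in>sets (OmegaM N). emeasure \<mu> A = (\<Sum>k\<in>{1..N}. ennreal (\<gamma> k) * emeasure (\<mu>s k) A)"
    using assms(5) unfolding S_set_def mem_Collect_eq by (elim conjE exE) (rule that, assumption+)
  have NN: "N \<in> {1..N}" using N2 by auto
  obtain h where hm: "h \<in> borel_measurable (OmegaM N)" and h0: "\<forall>x. 0 \<le> h x"
    and hinc: "increasing_on N (Omega_k N N) h" and hd0: "\<mu>s N = density (pi_k N \<alpha> N) (\<lambda>x. ennreal (h x))"
  proof -
    have "\<mu>s N \<in> S_k N \<alpha> N" using g NN by blast
    then show ?thesis unfolding S_k_def mem_Collect_eq by (elim conjE exE) (rule that, assumption+)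
  qed
  have hd: "\<mu>s N = density \<pi> (\<lambda>x. ennreal (h x))" using hd0 by (simp add: \<pi>_def)
  have gN: "0 \<le> \<gamma> N" using g NN by auto
  have hm': "h \<in> borel_measurable \<pi>" using hm by (simp add: measurable_cong_sets[OF pi_sets' refl])
  have muN: "ennreal (\<gamma> N) * emeasure (\<mu>s N) C = (\<integral>\<^sup>+ x. ennreal (\<gamma> N * h x) * indicator C x \<partial>\<pi>)"
    if C: "C \<in> sets (OmegaM N)" for C
  proof -
    have e1: "emeasure (\<mu>s N) C = (\<integral>\<^sup>+ x. ennreal (h x) * indicator C x \<partial>\<pi>)"
      unfolding hd using C hm' by (subst emeasure_density) (auto simp: pi_sets')
    then have "ennreal (\<gamma> N) * emeasure (\<mu>s N) C = (\<integral>\<^sup>+ x. ennreal (\<gamma> N) * (ennreal (h x) * indicator C x) \<partial>\<pi>)"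
    proof -
      have Cp[measurable]: "C \<in> sets \<pi>" using C by (simp add: pi_sets')
      note hm'[measurable]
      show ?thesis using e1 by (subst nn_integral_cmult) simp_all
    qed
    also have "\<dots> = (\<integral>\<^sup>+ x. ennreal (\<gamma> N * h x) * indicator C x \<partial>\<pi>)"
      using gN h0 by (intro nn_integral_cong) (simp add: ennreal_mult mult.assoc)
    finally show ?thesis .
  qed
  have pind: "emeasure \<pi> C = (\<integral>\<^sup>+ x. indicator C x \<partial>\<pi>)" if "C \<in> sets (OmegaM N)" for C
    using that by (simp add: pi_sets')
  define A where "A = UU N \<union> {x \<in> Omega N. 1 \<le> \<gamma> N * h x}"
  have A_sets: "A \<in> sets (OmegaM N)" unfolding A_def using N2 hm by measurable
  have key1: "emeasure \<mu> C \<le> emeasure \<pi> C"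
    if C: "C \<in> sets (OmegaM N)" "C \<inter> UU N = {}" "\<forall>x\<in>C. \<gamma> N * h x \<le> 1" for C
  proof -
    have z: "emeasure (\<mu>s k) C = 0" if k: "k \<in> {1..N} - {N}" for k
    proof -
      have sk: "\<mu>s k \<in> S_k N \<alpha> k" using g k by auto
      then interpret mk: prob_space "\<mu>s k" unfolding S_k_def by auto
      have sks: "sets (\<mu>s k) = sets (OmegaM N)" "emeasure (\<mu>s k) (Omega_k N k) = 1"
        using sk unfolding S_k_def by auto
      have spk: "space (\<mu>s k) = space (OmegaM N)" using sks(1) by (rule sets_eq_imp_space_eq)
      have "C \<subseteq> space (\<mu>s k) - Omega_k N k"
        using C(1,2) k N2 Omega_k_sub_UU[of N k] sets.sets_into_space[OF C(1)] spk by auto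
      then have "emeasure (\<mu>s k) C \<le> emeasure (\<mu>s k) (space (\<mu>s k) - Omega_k N k)"
        by (intro emeasure_mono) (auto simp: sks(1) spk)
      also have "\<dots> = 0"
      proof -
        have "measure (\<mu>s k) (Omega_k N k) = 1" using sks(2) mk.emeasure_eq_measure by simp
        then have "measure (\<mu>s k) (space (\<mu>s k) - Omega_k N k) = 0"
          using mk.prob_compl[of "Omega_k N k"] sks(1) by simp
        then show ?thesis by (simp add: mk.emeasure_eq_measure)
      qed
      finally show ?thesis by simp
    qed
    have "emeasure \<mu> C = (\<Sum>k\<in>{1..N}. ennreal (\<gamma> k) * emeasure (\<mu>s k) C)" using mdec C by auto
    also have "\<dots> = ennreal (\<gamma> N) * emeasure (\<mu>s N) C + (\<Sum>k\<in>{1..N} - {N}. ennreal (\<gamma> k) * emeasure (\<mu>s k) C)"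
      using NN by (subst sum.remove[of _ N]) auto
    also have "\<dots> = ennreal (\<gamma> N) * emeasure (\<mu>s N) C" using z by simp
    also have "\<dots> = (\<integral>\<^sup>+ x. ennreal (\<gamma> N * h x) * indicator C x \<partial>\<pi>)" using muN C by simp
    also have "\<dots> \<le> (\<integral>\<^sup>+ x. indicator C x \<partial>\<pi>)"
      using C(3) by (intro nn_integral_mono) (auto simp: indicator_def)
    also have "\<dots> = emeasure \<pi> C" using pind C by simp
    finally show ?thesis .
  qed
  have key2: "emeasure \<pi> C \<le> emeasure \<mu> C"
    if C: "C \<in> sets (OmegaM N)" "C \<subseteq> A" for C
  proof -
    have D: "C - UU N \<in> sets (OmegaM N)" using C N2 by auto
    have "emeasure \<pi> C \<le> emeasure \<pi> ((C - UU N) \<union> UU N)"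
      using C N2 by (intro emeasure_mono) (auto simp: pi_sets')
    also have "\<dots> \<le> emeasure \<pi> (C - UU N) + emeasure \<pi> (UU N)"
      using C N2 by (intro emeasure_subadditive) (auto simp: pi_sets')
    also have "\<dots> = (\<integral>\<^sup>+ x. indicator (C - UU N) x \<partial>\<pi>)" using piU pind[OF D] by simp
    also have "\<dots> \<le> (\<integral>\<^sup>+ x. ennreal (\<gamma> N * h x) * indicator (C - UU N) x \<partial>\<pi>)"
      using C(2) by (intro nn_integral_mono) (auto simp: indicator_def A_def)
    also have "\<dots> = ennreal (\<gamma> N) * emeasure (\<mu>s N) (C - UU N)" using muN[OF D] by simp
    also have "\<dots> \<le> (\<Sum>k\<in>{1..N}. ennreal (\<gamma> k) * emeasure (\<mu>s k) (C - UU N))"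
      using NN by (intro member_le_sum) auto
    also have "\<dots> = emeasure \<mu> (C - UU N)" using mdec D by auto
    also have "\<dots> \<le> emeasure \<mu> C" using C by (intro emeasure_mono) (auto simp: mu(2))
    finally show ?thesis .
  qed
  have key1r: "measure \<mu> C \<le> measure \<pi> C"
    if "C \<in> sets (OmegaM N)" "C \<inter> UU N = {}" "\<forall>x\<in>C. \<gamma> N * h x \<le> 1" for C
    using key1[OF that] by (simp add: mu.emeasure_eq_measure pi.emeasure_eq_measure)
  have key2r: "measure \<pi> C \<le> measure \<mu> C"
    if "C \<in> sets (OmegaM N)" "C \<subseteq> A" for C
    using key2[OF that] by (simp add: mu.emeasure_eq_measure pi.emeasure_eq_measure)
  have fm_mu: "finite_measure \<mu>" by (rule mu.finite_measure_axioms)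
  have fm_pi: "finite_measure \<pi>" by (rule pi.finite_measure_axioms)
  have Om: "Omega N \<in> sets (OmegaM N)" by simp
  have mu_out: "measure \<mu> (space (OmegaM N) - Omega N) = 0"
    using mu mu.prob_compl[of "Omega N"] by (simp add: mu.emeasure_eq_measure sp_mu)
  have pos: "measure \<mu> B - measure \<pi> B \<le> measure \<mu> A - measure \<pi> A"
    if B: "B \<in> sets (OmegaM N)" for B
  proof -
    define Bo where "Bo = B \<inter> Omega N"
    have Bo: "Bo \<in> sets (OmegaM N)" using B unfolding Bo_def by auto
    have "measure \<mu> (B - Omega N) \<le> measure \<mu> (space (OmegaM N) - Omega N)"
      using B sets.sets_into_space[OF B] by (intro mu.finite_measure_mono) (auto simp: mu(2))
    then have m1: "measure \<mu> B = measure \<mu> Bo"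
      using split_meas[OF fm_mu, of B "Omega N"] B mu_out by (simp add: mu(2) Bo_def measure_nonneg antisym)
    have p1: "measure \<pi> Bo \<le> measure \<pi> B"
      using B unfolding Bo_def by (intro pi.finite_measure_mono) (auto simp: pi_sets')
    have s1: "measure \<mu> Bo = measure \<mu> (Bo \<inter> A) + measure \<mu> (Bo - A)"
      using split_meas[OF fm_mu, of Bo A] Bo A_sets by (simp add: mu(2))
    have s2: "measure \<pi> Bo = measure \<pi> (Bo \<inter> A) + measure \<pi> (Bo - A)"
      using split_meas[OF fm_pi, of Bo A] Bo A_sets by (simp add: pi_sets')
    have s3: "measure \<mu> A = measure \<mu> (A \<inter> Bo) + measure \<mu> (A - Bo)"
      using split_meas[OF fm_mu, of A Bo] Bo A_sets by (simp add: mu(2))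
    have s4: "measure \<pi> A = measure \<pi> (A \<inter> Bo) + measure \<pi> (A - Bo)"
      using split_meas[OF fm_pi, of A Bo] Bo A_sets by (simp add: pi_sets')
    have k1: "measure \<mu> (Bo - A) \<le> measure \<pi> (Bo - A)"
      using Bo A_sets by (intro key1r) (auto simp: A_def Bo_def)
    have k2: "measure \<pi> (A - Bo) \<le> measure \<mu> (A - Bo)"
      using Bo A_sets by (intro key2r) auto
    have "A \<inter> Bo = Bo \<inter> A" by auto
    then show ?thesis using m1 p1 s1 s2 s3 s4 k1 k2 by simp
  qed
  have absb: "\<bar>measure \<mu> B - measure \<pi> B\<bar> \<le> measure \<mu> A - measure \<pi> A"
    if B: "B \<in> sets (OmegaM N)" for B
  proof -
    have Bc: "space (OmegaM N) - B \<in> sets (OmegaM N)" using B by auto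
    have sB: "space (OmegaM N) \<inter> B = B" using sets.sets_into_space[OF B] by auto
    have a1: "measure \<mu> (space (OmegaM N)) = measure \<mu> B + measure \<mu> (space (OmegaM N) - B)"
      using split_meas[OF fm_mu, of "space (OmegaM N)" B] B sB by (simp add: mu(2))
    have a2: "measure \<pi> (space (OmegaM N)) = measure \<pi> B + measure \<pi> (space (OmegaM N) - B)"
      using split_meas[OF fm_pi, of "space (OmegaM N)" B] B sB by (simp add: pi_sets')
    have a3: "measure \<mu> (space (OmegaM N)) = 1" using mu.prob_space sp_mu by simp
    have a4: "measure \<pi> (space (OmegaM N)) \<le> 1"
      using pi_tot pi.emeasure_eq_measure pi_space' by simp
    show ?thesis using pos[OF B] pos[OF Bc] a1 a2 a3 a4 by linarith
  qed
  have incA: "increasing_on N (Omega N) (indicator A :: _ \<Rightarrow> real)"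
    unfolding increasing_on_def
  proof (intro ballI impI)
    fix x y assume xy: "x \<in> Omega N" "y \<in> Omega N" "cle N x y"
    show "indicator A x \<le> (indicator A y :: real)"
    proof (cases "x \<in> A")
      case False then show ?thesis by (simp add: indicator_def)
    next
      case True
      have "y \<in> A"
      proof (cases "x \<in> UU N")
        case True then show ?thesis using UU_up[OF N2 True xy(2,3)] by (simp add: A_def)
      next
        case False
        then have x1: "1 \<le> \<gamma> N * h x" using \<open>x \<in> A\<close> by (simp add: A_def)
        have "h x \<le> h y" using hinc xy unfolding increasing_on_def Omega_k_N by auto
        then have "\<gamma> N * h x \<le> \<gamma> N * h y" using gN by (rule mult_left_mono)
        then show ?thesis using x1 xy(2) by (simp add: A_def)
      qed
      then show ?thesis by simp
    qed
  qed
  have bA: "bounded (range (indicator A :: _ \<Rightarrow> real))"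
    by (rule bounded_subset[OF finite_imp_bounded[of "{0,1}"]]) (auto simp: indicator_def)
  have mA: "(indicator A :: _ \<Rightarrow> real) \<in> borel_measurable (OmegaM N)" using A_sets by simp
  have "(\<integral>x. (indicator A x :: real) \<partial>\<mu>) \<le> (\<integral>x. indicator A x \<partial>\<nu>)"
    using assms(6)[unfolded stoch_dom_def, rule_format, OF mA bA incA] by simp
  then have dom: "measure \<mu> A \<le> measure \<nu> A"
    using A_sets by (simp add: mu(2) nu(2))
  have bdd: "bdd_above ((\<lambda>B. \<bar>measure \<nu> B - measure \<pi> B\<bar>) ` sets \<nu>)"
  proof (rule bdd_aboveI2)
    fix B assume "B \<in> sets \<nu>"
    have "measure \<nu> B \<le> 1" by (rule nu.prob_le_1)
    moreover have "measure \<pi> B \<le> measure \<pi> (space \<pi>)" by (rule pi.bounded_measure)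
    moreover have "0 \<le> measure \<nu> B" "0 \<le> measure \<pi> B" by (rule measure_nonneg)+
    ultimately show "\<bar>measure \<nu> B - measure \<pi> B\<bar> \<le> 1 + measure \<pi> (space \<pi>)"
      unfolding abs_le_iff by linarith
  qed
  have "measure \<mu> A - measure \<pi> A \<le> \<bar>measure \<nu> A - measure \<pi> A\<bar>" using dom by linarith
  also have "\<dots> \<le> tv_dist \<nu> \<pi>"
    unfolding tv_dist_def using A_sets bdd by (intro cSUP_upper) (auto simp: nu(2))
  finally have fin: "measure \<mu> A - measure \<pi> A \<le> tv_dist \<nu> \<pi>" .
  have "tv_dist \<mu> \<pi> \<le> tv_dist \<nu> \<pi>"
    unfolding tv_dist_def[of \<mu>]
  proof (rule cSUP_least)
    show "sets \<mu> \<noteq> {}" using sets.empty_sets by blast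
  next
    fix B assume "B \<in> sets \<mu>"
    then show "\<bar>measure \<mu> B - measure \<pi> B\<bar> \<le> tv_dist \<nu> \<pi>"
      using absb[of B] fin by (simp add: mu(2))
  qed
  then show ?thesis unfolding \<pi>_def .
qed

end
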